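(* Let $c$ be continuous and satisfy (C1)–(C3). Let $0\le\overline h\in L^\infty(\mathbb{R}^d\times\mathbb{R}^d)$ have compact support and let $0\le f,g\in L^1_c(\mathbb{R}^d)$ with $\Gamma(f,g)^{\overline h}\ne\emptyset$. Then $I_c$ has at most one minimizer on $\Gamma(f,g)^{\overline h}$ (as an element of $L^1(\mathbb{R}^d\times\mathbb{R}^d)$); combined with existence, the minimizer is unique.
   Context: Cost assumptions: (C1) $c$ is bounded; (C2) there is a Lebesgue-negligible closed set $Z\subset\mathbb{R}^d\times\mathbb{R}^d$ with $c\in C^2((\mathbb{R}^d\times\mathbb{R}^d)\setminus Z)$; (C3) $\det D^2_{xy}c(x,y)\ne0$ for all $(x,y)\notin Z$, where $D^2_{xy}c=(\partial^2c/\partial x_i\partial y_j)_{i,j}$. $L^1_c$: integrable functions with compact support. $\Gamma(f,g)$: the $0\le h\in L^1_c(\mathbb{R}^d\times\mathbb{R}^d)$ with $\int h(x,y)dy=f(x)$ and $\int h(x,y)dx=g(y)$ a.e.; $\Gamma(f,g)^{\overline h}:=\{h\in\Gamma(f,g):h\le\overline h\text{ a.e.}\}$. $I_c(h):=\int c\,h\,dx\,dy$. *)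

theory Defs
  imports "HOL-Analysis.Analysis"
begin

text \<open>Points of R^d x R^d are pairs (x,y) with x, y :: real^'n (d = CARD('n)).
  Lebesgue measure on R^d x R^d is the measure lebesgue on the product type.\<close>

type_synonym 'n pt = "(real ^ 'n) \<times> (real ^ 'n)"

text \<open>(C2)+(C3): c is C^2 on the open set U (first derivative D1, second derivative D2,
  the latter continuous), and the mixed Hessian D^2_{xy} c has nonzero determinant on U.
  The mixed second partial d^2 c / dx_i dy_j at z is D2 z applied to (e_i,0) and (0,e_j).\<close>

definition C2_nondeg_on :: "'n::finite pt set \<Rightarrow> ('n pt \<Rightarrow> real) \<Rightarrow> bool" where
  "C2_nondeg_on U c \<longleftrightarrow>
     (\<exists>D1 :: 'n pt \<Rightarrow> ('n pt \<Rightarrow>\<^sub>L real).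
      \<exists>D2 :: 'n pt \<Rightarrow> ('n pt \<Rightarrow>\<^sub>L ('n pt \<Rightarrow>\<^sub>L real)).
        (\<forall>z\<in>U. (c has_derivative blinfun_apply (D1 z)) (at z)) \<and>
        (\<forall>z\<in>U. (D1 has_derivative blinfun_apply (D2 z)) (at z)) \<and>
        continuous_on U D2 \<and>
        (\<forall>z\<in>U. det (\<chi> i j. blinfun_apply (blinfun_apply (D2 z) (axis i 1, 0)) (0, axis j 1)) \<noteq> 0))"

definition cost_assumptions :: "('n::finite pt \<Rightarrow> real) \<Rightarrow> bool" where
  "cost_assumptions c \<longleftrightarrow>
     bounded (range c) \<and>
     (\<exists>Z. closed Z \<and> negligible Z \<and> C2_nondeg_on (- Z) c)"

definition L1c :: "('a::euclidean_space \<Rightarrow> real) \<Rightarrow> bool" where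
  "L1c f \<longleftrightarrow> integrable lebesgue f \<and>
     (\<exists>K. compact K \<and> (AE z in lebesgue. z \<notin> K \<longrightarrow> f z = 0))"

definition Gamma :: "(real^'n::finite \<Rightarrow> real) \<Rightarrow> (real^'n \<Rightarrow> real) \<Rightarrow> ('n pt \<Rightarrow> real) set" where
  "Gamma f g = {h. L1c h \<and> (AE z in lebesgue. 0 \<le> h z) \<and>
      (AE x in lebesgue. (\<integral>y. h (x, y) \<partial>lebesgue) = f x) \<and>
      (AE y in lebesgue. (\<integral>x. h (x, y) \<partial>lebesgue) = g y)}"

definition Gamma_bar :: "(real^'n::finite \<Rightarrow> real) \<Rightarrow> (real^'n \<Rightarrow> real) \<Rightarrow> ('n pt \<Rightarrow> real)
     \<Rightarrow> ('n pt \<Rightarrow> real) set" where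
  "Gamma_bar f g hb = {h \<in> Gamma f g. AE z in lebesgue. h z \<le> hb z}"

definition I_c :: "('n::finite pt \<Rightarrow> real) \<Rightarrow> ('n pt \<Rightarrow> real) \<Rightarrow> real" where
  "I_c c h = (\<integral>z. c z * h z \<partial>lebesgue)"

definition is_minimizer :: "('n::finite pt \<Rightarrow> real) \<Rightarrow> ('n pt \<Rightarrow> real) set \<Rightarrow> ('n pt \<Rightarrow> real) \<Rightarrow> bool" where
  "is_minimizer c S h \<longleftrightarrow> h \<in> S \<and> (\<forall>h'\<in>S. I_c c h \<le> I_c c h')"

end

theory Submission
  imports Defs
begin



lemma lebesgue_translate:
  "distr lebesgue lebesgue (\<lambda>x. t + x) = (lebesgue :: 'a::euclidean_space measure)"
proof -
  have eq: "(\<lambda>x::'a. t + (\<Sum>j\<in>Basis. (1 * (x \<bullet> j)) *\<^sub>R j)) = (\<lambda>x. t + x)"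
    by (simp add: euclidean_representation)
  have "(lebesgue::'a measure) = density (distr lebesgue lebesgue (\<lambda>x. t + x)) (\<lambda>_. (\<Prod>j\<in>(Basis::'a set). \<bar>1::real\<bar>))"
    using lebesgue_affine_euclidean[of "\<lambda>_. 1" t] unfolding eq by simp
  then show ?thesis by (simp add: density_1)
qed

lemma translate_measurable: "(\<lambda>x. t + x) \<in> (lebesgue :: 'a::euclidean_space measure) \<rightarrow>\<^sub>M lebesgue"
  using lebesgue_affine_measurable[of "\<lambda>_. 1" t] by (simp add: euclidean_representation)

lemma integral_translate:
  fixes f :: "'a::euclidean_space \<Rightarrow> real"
  assumes "f \<in> borel_measurable lebesgue"
  shows "(\<integral>x. f (t + x) \<partial>lebesgue) = (\<integral>x. f x \<partial>lebesgue)"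
  using integral_distr[OF translate_measurable assms, of t] lebesgue_translate[of t] by simp

lemma integrable_translate:
  fixes f :: "'a::euclidean_space \<Rightarrow> real"
  assumes "f \<in> borel_measurable lebesgue"
  shows "integrable lebesgue (\<lambda>x. f (t + x)) \<longleftrightarrow> integrable lebesgue f"
  using integrable_distr_eq[OF translate_measurable assms, of t] lebesgue_translate[of t] by simp



lemma lebesgue_sections_integrable:
  fixes h :: "('a::euclidean_space \<times> 'b::euclidean_space) \<Rightarrow> real"
  assumes h: "integrable lebesgue h"
  shows "AE x in lebesgue. integrable lebesgue (\<lambda>y. h (x,y))"
    and "AE y in lebesgue. integrable lebesgue (\<lambda>x. h (x,y))"
proof -
  have hm: "h \<in> borel_measurable (completion lborel)"
    using h by simp
  obtain g where gm: "g \<in> borel_measurable lborel" and ae: "AE z in lborel. h z = g z"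
    using completion_ex_borel_measurable_real[OF hm] by blast
  have gm': "g \<in> borel_measurable lebesgue"
    using gm by (simp add: measurable_completion)
  have "integrable lebesgue g"
    using h gm' AE_completion[OF ae] by (auto simp: intro: integrable_cong_AE_imp)
  then have gi: "integrable lborel g"
    using gm by (simp add: integrable_completion)
  then have gi2: "integrable (lborel \<Otimes>\<^sub>M lborel) (\<lambda>(x,y). g (x,y))"
    by (simp add: lborel_prod)
  have ae2: "AE z in (lborel \<Otimes>\<^sub>M lborel). h z = g z"
    using ae unfolding lborel_prod .
  have gm2[measurable]: "g \<in> borel_measurable (lborel \<Otimes>\<^sub>M lborel)"
    using gm unfolding lborel_prod .
  have A: "AE x in lborel. AE y in lborel. h (x,y) = g (x,y)"
    using lborel_pair.AE_pair[OF ae2] .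
  have B: "AE x in lborel. integrable lborel (\<lambda>y. g (x,y))"
    using lborel_pair.AE_integrable_fst[of "\<lambda>x y. g (x,y)"] gi2 by simp
  have "AE x in lborel. integrable lebesgue (\<lambda>y. h (x,y))"
    using A B
  proof eventually_elim
    case (elim x)
    have m: "(\<lambda>y. g (x,y)) \<in> borel_measurable lborel"
      using gm by measurable
    then have i: "integrable lebesgue (\<lambda>y. g (x,y))"
      using elim(2) by (simp add: integrable_completion)
    have ae': "AE y in lebesgue. g (x,y) = h (x,y)"
      using AE_completion[OF elim(1)] by (auto simp: elim: AE_mp)
    have "(\<lambda>y. h (x,y)) \<in> borel_measurable lebesgue"
      using borel_measurable_AE[OF _ ae'] m by (simp add: measurable_completion)
    then show ?case
      using integrable_cong_AE_imp[OF i _ ae'] by blast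
  qed
  then show "AE x in lebesgue. integrable lebesgue (\<lambda>y. h (x,y))"
    by (simp add: AE_completion)
  obtain N where N: "{z \<in> space lborel. \<not> h z = g z} \<subseteq> N" "emeasure lborel N = 0" "N \<in> sets lborel"
    using ae by (rule AE_E)
  have N2: "N \<in> sets (lborel \<Otimes>\<^sub>M lborel)"
    using N(3) unfolding lborel_prod .
  have aeN: "AE z in (lborel \<Otimes>\<^sub>M lborel). z \<notin> N"
    using AE_not_in[of N lborel] N(2,3) unfolding lborel_prod by (simp add: null_setsI)
  have aexy: "AE x in lborel. AE y in lborel. (x,y) \<notin> N"
    using lborel_pair.AE_pair[OF aeN] .
  have NC: "{z. z \<notin> N} \<in> sets (lborel \<Otimes>\<^sub>M lborel)"
  proof -
    have "{z. z \<notin> N} = space (lborel \<Otimes>\<^sub>M lborel) - N" by (auto simp: space_pair_measure)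
    then show ?thesis using sets.compl_sets[OF N2] by simp
  qed
  have yx: "AE y in lborel. AE x in lborel. (x,y) \<notin> N"
    using aexy lborel_pair.AE_commute[of "\<lambda>x y. (x,y) \<notin> N"] NC by (simp add: space_pair_measure)
  have A': "AE y in lborel. AE x in lborel. h (x,y) = g (x,y)"
  proof (rule AE_mp[OF yx], rule AE_I2, rule impI)
    fix y assume "y \<in> space lborel" "AE x in lborel. (x,y) \<notin> N"
    from this(2) show "AE x in lborel. h (x,y) = g (x,y)"
      by (rule AE_mp) (use N(1) in auto)
  qed
  have B': "AE y in lborel. integrable lborel (\<lambda>x. g (x,y))"
    using lborel_pair.AE_integrable_snd[of "\<lambda>x y. g (x,y)"] gi2 by simp
  have "AE y in lborel. integrable lebesgue (\<lambda>x. h (x,y))"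
    using A' B'
  proof eventually_elim
    case (elim y)
    have m: "(\<lambda>x. g (x,y)) \<in> borel_measurable lborel"
      using gm by measurable
    then have i: "integrable lebesgue (\<lambda>x. g (x,y))"
      using elim(2) by (simp add: integrable_completion)
    have ae': "AE x in lebesgue. g (x,y) = h (x,y)"
      using AE_completion[OF elim(1)] by (auto elim: AE_mp)
    have "(\<lambda>x. h (x,y)) \<in> borel_measurable lebesgue"
      using borel_measurable_AE[OF _ ae'] m by (simp add: measurable_completion)
    then show ?case
      using integrable_cong_AE_imp[OF i _ ae'] by blast
  qed
  then show "AE y in lebesgue. integrable lebesgue (\<lambda>x. h (x,y))"
    by (simp add: AE_completion)
qed



lemma mixed_diff:
  fixes c :: "'n::finite pt \<Rightarrow> real"
    and D1 :: "'n pt \<Rightarrow> ('n pt \<Rightarrow>\<^sub>L real)"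
    and D2 :: "'n pt \<Rightarrow> ('n pt \<Rightarrow>\<^sub>L ('n pt \<Rightarrow>\<^sub>L real))"
  assumes d1: "\<And>z. z \<in> B \<Longrightarrow> (c has_derivative blinfun_apply (D1 z)) (at z)"
    and d2: "\<And>z. z \<in> B \<Longrightarrow> (D1 has_derivative blinfun_apply (D2 z)) (at z)"
    and cvx: "convex B"
    and P: "(x,y) \<in> B" "(x - a, y) \<in> B" "(x, y - b) \<in> B" "(x - a, y - b) \<in> B"
  shows "\<exists>w\<in>B. c (x,y) - c (x-a,y) - c (x,y-b) + c (x-a,y-b) =
            blinfun_apply (blinfun_apply (D2 w) (a,0)) (0,b)"
proof -
  define p where "p s = (x, y - b + s *\<^sub>R b)" for s :: real
  define q where "q s = (x - a, y - b + s *\<^sub>R b)" for s :: real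
  have pB: "p s \<in> B" if "s \<in> {0..1}" for s
  proof -
    have "p s = (1 - s) *\<^sub>R (x, y - b) + s *\<^sub>R (x, y)"
      by (simp add: p_def algebra_simps)
    then show ?thesis using convexD[OF cvx P(3) P(1), of "1-s" s] that by auto
  qed
  have qB: "q s \<in> B" if "s \<in> {0..1}" for s
  proof -
    have "q s = (1 - s) *\<^sub>R (x - a, y - b) + s *\<^sub>R (x - a, y)"
      by (simp add: q_def algebra_simps)
    then show ?thesis using convexD[OF cvx P(4) P(2), of "1-s" s] that by auto
  qed
  have dp: "(p has_derivative (\<lambda>t. (0, t *\<^sub>R b))) (at s within {0..1})" for s
    unfolding p_def by (auto intro!: derivative_eq_intros)
  have dq: "(q has_derivative (\<lambda>t. (0, t *\<^sub>R b))) (at s within {0..1})" for s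
    unfolding q_def by (auto intro!: derivative_eq_intros)
  define \<phi> where "\<phi> s = c (p s) - c (q s)" for s
  have "\<exists>s\<in>{0..1}. \<phi> 1 - \<phi> 0 =
     (\<lambda>t. blinfun_apply (D1 (p s)) (0, t *\<^sub>R b) - blinfun_apply (D1 (q s)) (0, t *\<^sub>R b)) (1 - 0)"
  proof (rule mvt_very_simple)
    fix s :: real assume s: "0 \<le> s" "s \<le> 1"
    have "((\<lambda>s. c (p s)) has_derivative (\<lambda>t. blinfun_apply (D1 (p s)) (0, t *\<^sub>R b))) (at s within {0..1})"
      using has_derivative_compose[OF dp d1[OF pB]] s by auto
    moreover have "((\<lambda>s. c (q s)) has_derivative (\<lambda>t. blinfun_apply (D1 (q s)) (0, t *\<^sub>R b))) (at s within {0..1})"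
      using has_derivative_compose[OF dq d1[OF qB]] s by auto
    ultimately show "(\<phi> has_derivative (\<lambda>t. blinfun_apply (D1 (p s)) (0, t *\<^sub>R b) - blinfun_apply (D1 (q s)) (0, t *\<^sub>R b))) (at s within {0..1})"
      unfolding \<phi>_def by (rule has_derivative_diff)
  qed simp
  then obtain s where s: "s \<in> {0..1}"
    and e1: "\<phi> 1 - \<phi> 0 = blinfun_apply (D1 (p s)) (0, b) - blinfun_apply (D1 (q s)) (0, b)"
    by auto
  have lhs: "\<phi> 1 - \<phi> 0 = c (x,y) - c (x-a,y) - c (x,y-b) + c (x-a,y-b)"
    by (simp add: \<phi>_def p_def q_def)
  define y' where "y' = y - b + s *\<^sub>R b"
  define r where "r t = (x - a + t *\<^sub>R a, y')" for t :: real
  have rB: "r t \<in> B" if "t \<in> {0..1}" for t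
  proof -
    have "r t = (1 - t) *\<^sub>R q s + t *\<^sub>R p s"
      by (simp add: r_def p_def q_def y'_def algebra_simps)
    then show ?thesis using convexD[OF cvx qB[OF s] pB[OF s], of "1-t" t] that by auto
  qed
  have dr: "(r has_derivative (\<lambda>t. (t *\<^sub>R a, 0))) (at t within {0..1})" for t
    unfolding r_def by (auto intro!: derivative_eq_intros)
  have bl: "bounded_linear (\<lambda>L::'n pt \<Rightarrow>\<^sub>L real. blinfun_apply L (0,b))"
    by (rule bounded_bilinear.bounded_linear_left[OF bounded_bilinear_blinfun_apply])
  define \<psi> where "\<psi> t = blinfun_apply (D1 (r t)) (0,b)" for t
  have "\<exists>t\<in>{0..1}. \<psi> 1 - \<psi> 0 = (\<lambda>u. blinfun_apply (blinfun_apply (D2 (r t)) (u *\<^sub>R a, 0)) (0,b)) (1 - 0)"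
  proof (rule mvt_very_simple)
    fix t :: real assume t: "0 \<le> t" "t \<le> 1"
    have "((\<lambda>t. D1 (r t)) has_derivative (\<lambda>u. blinfun_apply (D2 (r t)) (u *\<^sub>R a, 0))) (at t within {0..1})"
      using has_derivative_compose[OF dr d2[OF rB]] t by auto
    then show "(\<psi> has_derivative (\<lambda>u. blinfun_apply (blinfun_apply (D2 (r t)) (u *\<^sub>R a, 0)) (0,b))) (at t within {0..1})"
      unfolding \<psi>_def using has_derivative_compose[OF _ bounded_linear.has_derivative[OF bl has_derivative_ident]]
      by blast
  qed simp
  then obtain t where t: "t \<in> {0..1}"
    and e2: "\<psi> 1 - \<psi> 0 = blinfun_apply (blinfun_apply (D2 (r t)) (a, 0)) (0,b)"
    by auto
  have "\<psi> 1 - \<psi> 0 = blinfun_apply (D1 (p s)) (0, b) - blinfun_apply (D1 (q s)) (0, b)"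
    by (simp add: \<psi>_def r_def p_def q_def y'_def)
  then show ?thesis using e1 e2 lhs rB[OF t] by metis
qed



lemma steinhaus4:
  fixes A :: "'a::euclidean_space set"
  assumes A: "A \<in> sets lebesgue" "bounded A" "emeasure lebesgue A > 0"
  obtains K \<delta> where "compact K" "K \<subseteq> A" "\<delta> > 0"
    "\<And>v1 v2 v3. norm v1 < \<delta> \<Longrightarrow> norm v2 < \<delta> \<Longrightarrow> norm v3 < \<delta> \<Longrightarrow>
        measure lebesgue (K \<inter> ((+) v1 ` K) \<inter> ((+) v2 ` K) \<inter> ((+) v3 ` K)) > 0"
proof -
  have Al: "A \<in> lmeasurable" using A bounded_set_imp_lmeasurable by blast
  define mA where "mA = measure lebesgue A"
  have mA: "mA > 0"
    using A(3) Al by (simp add: mA_def emeasure_eq_measure2)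
  obtain K where K: "closed K" "K \<subseteq> A" "A - K \<in> lmeasurable" "emeasure lebesgue (A - K) < ennreal (mA/2)"
    using sets_lebesgue_inner_closed[OF A(1), of "mA/2"] mA by auto
  have Kc: "compact K" using K(1,2) A(2) bounded_subset compact_eq_bounded_closed by blast
  have Kl: "K \<in> lmeasurable" using Kc lmeasurable_compact by blast
  have "measure lebesgue (A - K) < mA/2"
    using K(3,4) mA by (simp add: emeasure_eq_measure2 ennreal_less_iff)
  moreover have "measure lebesgue (A - K) = mA - measure lebesgue K"
    unfolding mA_def by (rule measure_Diff) (use Al Kl K(2) in \<open>auto simp: fmeasurable_def\<close>)
  ultimately have mK: "measure lebesgue K > 0" using mA by simp
  define mK where "mK = measure lebesgue K"
  obtain U where U: "open U" "K \<subseteq> U" "U - K \<in> lmeasurable" "emeasure lebesgue (U - K) < ennreal (mK/3)"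
    using sets_lebesgue_outer_open[of K "mK/3"] Kl mK by (auto simp: mK_def)
  have UKl: "measure lebesgue (U - K) < mK/3"
    using U(3,4) mK by (simp add: emeasure_eq_measure2 ennreal_less_iff mK_def)
  have Ul: "U \<in> lmeasurable"
  proof -
    have "U = K \<union> (U - K)" using U(2) by auto
    then show ?thesis using Kl U(3) by (metis fmeasurable.Un)
  qed
  have mU: "measure lebesgue U = mK + measure lebesgue (U - K)"
    using measure_Diff[of lebesgue U K] Ul Kl U(2) by (auto simp: fmeasurable_def mK_def)
  obtain \<delta> where \<delta>: "\<delta> > 0" "\<forall>x\<in>K. \<forall>y\<in>-U. \<delta> \<le> dist x y"
    using separate_compact_closed[OF Kc, of "-U"] U(1,2) by auto
  have sub: "(+) v ` K \<subseteq> U" if "norm v < \<delta>" for v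
  proof
    fix z assume "z \<in> (+) v ` K"
    then obtain k where k: "k \<in> K" "z = v + k" by auto
    show "z \<in> U"
    proof (rule ccontr)
      assume "z \<notin> U"
      then have "\<delta> \<le> dist k z" using \<delta>(2) k by auto
      also have "dist k z = norm v" using k by (simp add: dist_norm)
      finally show False using that by simp
    qed
  qed
  have tl: "(+) v ` K \<in> lmeasurable" for v
    using Kc compact_translation lmeasurable_compact by blast
  have tm: "measure lebesgue ((+) v ` K) = mK" for v
    by (simp add: measure_translation mK_def)
  have dif: "measure lebesgue (U - (+) v ` K) = measure lebesgue U - mK" if "norm v < \<delta>" for v
    using measure_Diff[of lebesgue U "(+) v ` K"] Ul tl[of v] sub[OF that] tm[of v]
    by (auto simp: fmeasurable_def)
  show ?thesis
  proof (rule that[OF Kc K(2) \<delta>(1)])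
    fix v1 v2 v3 :: 'a
    assume v: "norm v1 < \<delta>" "norm v2 < \<delta>" "norm v3 < \<delta>"
    define F where "F = K \<inter> ((+) v1 ` K) \<inter> ((+) v2 ` K) \<inter> ((+) v3 ` K)"
    have Fl: "F \<in> lmeasurable" unfolding F_def using Kl tl by auto
    have FU: "F \<subseteq> U" unfolding F_def using U(2) by auto
    have eqUF: "U - F = (U - K) \<union> (U - (+) v1 ` K) \<union> (U - (+) v2 ` K) \<union> (U - (+) v3 ` K)"
      unfolding F_def by auto
    then have "measure lebesgue (U - F) \<le> measure lebesgue (U - K) + measure lebesgue (U - (+) v1 ` K)
        + measure lebesgue (U - (+) v2 ` K) + measure lebesgue (U - (+) v3 ` K)"
    proof -
      have l1: "U - K \<in> lmeasurable" "U - (+) v1 ` K \<in> lmeasurable" "U - (+) v2 ` K \<in> lmeasurable" "U - (+) v3 ` K \<in> lmeasurable"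
        using Ul Kl tl by (auto intro: fmeasurable_Diff)
      have sa: "measure lebesgue (X \<union> Y) \<le> measure lebesgue X + measure lebesgue Y"
        if "X \<in> lmeasurable" "Y \<in> lmeasurable" for X Y :: "'a set"
        using measure_subadditive[of X lebesgue Y] that by (auto simp: fmeasurable_def)
      have "measure lebesgue ((U - K) \<union> (U - (+) v1 ` K) \<union> (U - (+) v2 ` K) \<union> (U - (+) v3 ` K))
         \<le> measure lebesgue ((U - K) \<union> (U - (+) v1 ` K) \<union> (U - (+) v2 ` K)) + measure lebesgue (U - (+) v3 ` K)"
        using l1 by (intro sa) auto
      moreover have "measure lebesgue ((U - K) \<union> (U - (+) v1 ` K) \<union> (U - (+) v2 ` K))
         \<le> measure lebesgue ((U - K) \<union> (U - (+) v1 ` K)) + measure lebesgue (U - (+) v2 ` K)"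
        using l1 by (intro sa) auto
      moreover have "measure lebesgue ((U - K) \<union> (U - (+) v1 ` K))
         \<le> measure lebesgue (U - K) + measure lebesgue (U - (+) v1 ` K)"
        using l1 by (intro sa) auto
      ultimately show ?thesis unfolding eqUF by linarith
    qed
    also have "\<dots> = measure lebesgue (U - K) + 3 * (measure lebesgue U - mK)"
      using dif v by simp
    finally have le: "measure lebesgue (U - F) \<le> measure lebesgue (U - K) + 3 * (measure lebesgue U - mK)" .
    have "measure lebesgue (U - F) = measure lebesgue U - measure lebesgue F"
      using measure_Diff[of lebesgue U F] Ul Fl FU by (auto simp: fmeasurable_def)
    note facts = this le mU UKl mK
    show "measure lebesgue F > 0"
    proof -
      define a where "a = measure lebesgue (U - F)"
      define b where "b = measure lebesgue U"
      define d where "d = measure lebesgue F"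
      define e where "e = measure lebesgue (U - K)"
      define k where "k = measure lebesgue K"
      have "a = b - d" "a \<le> e + 3 * (b - k)" "b = k + e" "e < k / 3" "0 < k"
        using facts unfolding a_def b_def d_def e_def k_def mK_def by auto
      then have "d > 0" by argo
      then show ?thesis by (simp add: d_def)
    qed
  qed
qed



lemma good_ball:
  fixes c :: "'n::finite pt \<Rightarrow> real"
  assumes ca: "cost_assumptions c"
    and S: "S \<in> sets lebesgue" "emeasure lebesgue S > 0"
  obtains B i j \<sigma> D1 D2 where "open B" "convex B" "bounded B" "emeasure lebesgue (S \<inter> B) > 0"
    "\<And>z. z \<in> B \<Longrightarrow> (c has_derivative blinfun_apply (D1 z)) (at z)"
    "\<And>z. z \<in> B \<Longrightarrow> ((D1 :: 'n pt \<Rightarrow> ('n pt \<Rightarrow>\<^sub>L real)) has_derivative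
                  blinfun_apply ((D2 :: 'n pt \<Rightarrow> ('n pt \<Rightarrow>\<^sub>L ('n pt \<Rightarrow>\<^sub>L real))) z)) (at z)"
    "\<And>w. w \<in> B \<Longrightarrow> \<sigma> * blinfun_apply (blinfun_apply (D2 w) (axis i 1, 0)) (0, axis j 1) > (0::real)"
proof -
  obtain Z where Z: "closed Z" "negligible Z" "C2_nondeg_on (- Z) c"
    using ca unfolding cost_assumptions_def by blast
  obtain D1 :: "'n pt \<Rightarrow> ('n pt \<Rightarrow>\<^sub>L real)" and D2 :: "'n pt \<Rightarrow> ('n pt \<Rightarrow>\<^sub>L ('n pt \<Rightarrow>\<^sub>L real))"
    where d1: "\<forall>z\<in>-Z. (c has_derivative blinfun_apply (D1 z)) (at z)"
      and d2: "\<forall>z\<in>-Z. (D1 has_derivative blinfun_apply (D2 z)) (at z)"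
      and d2c: "continuous_on (-Z) D2"
      and nd: "\<forall>z\<in>-Z. det (\<chi> i j. blinfun_apply (blinfun_apply (D2 z) (axis i 1, 0)) (0, axis j 1)) \<noteq> 0"
    using Z(3) unfolding C2_nondeg_on_def by blast
  define M where "M i j w = blinfun_apply (blinfun_apply (D2 w) (axis i 1, 0)) (0, axis j 1)" for i j w
  define \<F> where "\<F> = {B. \<exists>w r i j \<sigma>. B = ball w r \<and> B \<subseteq> -Z \<and> (\<forall>v\<in>B. \<sigma> * M i j v > (0::real))}"
  have cover: "\<exists>B\<in>\<F>. w \<in> B" if w: "w \<in> -Z" for w
  proof -
    have "\<exists>i j. M i j w \<noteq> 0"
    proof (rule ccontr)
      assume "\<not> ?thesis"
      then have "row undefined (\<chi> i j. M i j w) = 0"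
        by (simp add: row_def vec_eq_iff)
      then have "det (\<chi> i j. M i j w) = 0" by (rule det_zero_row)
      then show False using nd w unfolding M_def by auto
    qed
    then obtain i j where ij: "M i j w \<noteq> 0" by blast
    have "isCont D2 w" using d2c w Z(1) continuous_on_eq_continuous_at by blast
    then have "isCont (M i j) w" unfolding M_def by (intro continuous_intros)
    then obtain r1 where r1: "r1 > 0" "\<And>v. dist v w < r1 \<Longrightarrow> dist (M i j v) (M i j w) < \<bar>M i j w\<bar>"
      using ij unfolding continuous_at_eps_delta by (meson zero_less_abs_iff)
    obtain r2 where r2: "r2 > 0" "ball w r2 \<subseteq> -Z"
      using w Z(1) open_contains_ball by blast
    define r where "r = min r1 r2"
    define \<sigma> where "\<sigma> = sgn (M i j w)"
    have "ball w r \<in> \<F>"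
      unfolding \<F>_def
    proof (intro CollectI exI conjI)
      show "ball w r \<subseteq> - Z" using r2 by (auto simp: r_def)
      show "\<forall>v\<in>ball w r. \<sigma> * M i j v > 0"
      proof
        fix v assume "v \<in> ball w r"
        then have "dist v w < r1" by (auto simp: r_def dist_commute)
        then have "\<bar>M i j v - M i j w\<bar> < \<bar>M i j w\<bar>" using r1 by (simp add: dist_real_def)
        then show "\<sigma> * M i j v > 0" using ij unfolding \<sigma>_def
          by (cases "M i j w > 0") (auto simp: abs_if split: if_splits)
      qed
    qed simp
    moreover have "w \<in> ball w r" using r1 r2 by (simp add: r_def)
    ultimately show ?thesis by blast
  qed
  have opn: "\<And>B. B \<in> \<F> \<Longrightarrow> open B" unfolding \<F>_def by auto
  obtain \<F>' where F': "\<F>' \<subseteq> \<F>" "countable \<F>'" "\<Union>\<F>' = \<Union>\<F>"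
    using Lindelof[of \<F>, OF opn] by blast
  have UF: "\<Union>\<F> = -Z"
  proof
    show "\<Union>\<F> \<subseteq> -Z" unfolding \<F>_def by blast
    show "-Z \<subseteq> \<Union>\<F>" using cover by blast
  qed
  have "\<exists>B\<in>\<F>'. emeasure lebesgue (S \<inter> B) > 0"
  proof (rule ccontr)
    assume "\<not> ?thesis"
    then have nB: "S \<inter> B \<in> null_sets lebesgue" if "B \<in> \<F>'" for B
      using that F'(1) opn S(1) by (auto simp: null_sets_def intro!: sets.Int borel_open)
    have "(\<Union>B\<in>\<F>'. S \<inter> B) \<in> null_sets lebesgue"
      by (rule null_sets_UN'[OF F'(2) nB])
    moreover have "(\<Union>B\<in>\<F>'. S \<inter> B) = S - Z" using F'(3) UF by auto
    moreover have "S \<inter> Z \<in> null_sets lebesgue"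
    proof -
      have "negligible (S \<inter> Z)" by (rule negligible_subset[OF Z(2)]) auto
      then show ?thesis by (simp add: negligible_iff_null_sets)
    qed
    ultimately have "(S - Z) \<union> (S \<inter> Z) \<in> null_sets lebesgue" by auto
    moreover have "(S - Z) \<union> (S \<inter> Z) = S" by auto
    ultimately show False using S(2) by auto
  qed
  then obtain B where B: "B \<in> \<F>'" "emeasure lebesgue (S \<inter> B) > 0" by blast
  then obtain w r i j \<sigma> where Bd: "B = ball w r" "B \<subseteq> -Z" "\<forall>v\<in>B. \<sigma> * M i j v > (0::real)"
    using F'(1) unfolding \<F>_def by blast
  show ?thesis
  proof (rule that[of B D1 D2 \<sigma> i j])
    show "open B" "convex B" "bounded B" using Bd(1) by auto
    show "emeasure lebesgue (S \<inter> B) > 0" by (rule B(2))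
    show "\<And>z. z \<in> B \<Longrightarrow> (c has_derivative blinfun_apply (D1 z)) (at z)"
      using Bd(2) d1 by blast
    show "\<And>z. z \<in> B \<Longrightarrow> (D1 has_derivative blinfun_apply (D2 z)) (at z)"
      using Bd(2) d2 by blast
    show "\<And>w. w \<in> B \<Longrightarrow> \<sigma> * blinfun_apply (blinfun_apply (D2 w) (axis i 1, 0)) (0, axis j 1) > 0"
      using Bd(3) unfolding M_def by blast
  qed
qed



lemma integral_add_zero_perturb:
  fixes H P :: "'a::euclidean_space \<Rightarrow> real"
  assumes P: "integrable lebesgue P" "(\<integral>y. P y \<partial>lebesgue) = 0"
  shows "(\<integral>y. H y + d * P y \<partial>lebesgue) = (\<integral>y. H y \<partial>lebesgue)"
proof (cases "integrable lebesgue H")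
  case True
  then show ?thesis using P by simp
next
  case False
  have "\<not> integrable lebesgue (\<lambda>y. H y + d * P y)"
  proof
    assume "integrable lebesgue (\<lambda>y. H y + d * P y)"
    then have "integrable lebesgue (\<lambda>y. (H y + d * P y) - d * P y)"
      using P(1) by (intro Bochner_Integration.integrable_diff) auto
    then show False using False by simp
  qed
  then show ?thesis using False by (simp add: not_integrable_integral_eq)
qed

lemma compact_sections:
  fixes F :: "('a::euclidean_space \<times> 'b::euclidean_space) set"
  assumes "compact F"
  shows "compact {y. (x,y) \<in> F}" "compact {x. (x,y) \<in> F}"
proof -
  have "closed {y. (x,y) \<in> F}"
    using continuous_closed_vimage[of F "\<lambda>y. (x,y)"] assms compact_imp_closed
    by (auto simp: vimage_def intro!: continuous_intros)
  moreover have "{y. (x,y) \<in> F} \<subseteq> snd ` F" by force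
  moreover have "bounded (snd ` F)" using assms compact_imp_bounded bounded_snd by blast
  ultimately show "compact {y. (x,y) \<in> F}" using bounded_subset compact_eq_bounded_closed by blast
  have "closed {x. (x,y) \<in> F}"
    using continuous_closed_vimage[of F "\<lambda>x. (x,y)"] assms compact_imp_closed
    by (auto simp: vimage_def intro!: continuous_intros)
  moreover have "{x. (x,y) \<in> F} \<subseteq> fst ` F" by force
  moreover have "bounded (fst ` F)" using assms compact_imp_bounded bounded_fst by blast
  ultimately show "compact {x. (x,y) \<in> F}" using bounded_subset compact_eq_bounded_closed by blast
qed

lemma indicator_section_integrable:
  fixes F :: "('a::euclidean_space \<times> 'b::euclidean_space) set"
  assumes "compact F"
  shows "integrable lebesgue (\<lambda>y. indicator F (x, y) :: real)"
    and "integrable lebesgue (\<lambda>x. indicator F (x, y) :: real)"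
    and "(\<lambda>y. indicator F (x, y) :: real) \<in> borel_measurable lebesgue"
    and "(\<lambda>x. indicator F (x, y) :: real) \<in> borel_measurable lebesgue"
proof -
  have e1: "(\<lambda>y. indicator F (x, y) :: real) = indicator {y. (x,y) \<in> F}"
    by (auto simp: indicator_def)
  have e2: "(\<lambda>x. indicator F (x, y) :: real) = indicator {x. (x,y) \<in> F}"
    by (auto simp: indicator_def)
  have l1: "{y. (x,y) \<in> F} \<in> lmeasurable" "{x. (x,y) \<in> F} \<in> lmeasurable"
    using compact_sections[OF assms] lmeasurable_compact by blast+
  show "integrable lebesgue (\<lambda>y. indicator F (x, y) :: real)"
    "integrable lebesgue (\<lambda>x. indicator F (x, y) :: real)"
    unfolding e1 e2 using l1 by (auto simp: fmeasurable_def)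
  then show "(\<lambda>y. indicator F (x, y) :: real) \<in> borel_measurable lebesgue"
    "(\<lambda>x. indicator F (x, y) :: real) \<in> borel_measurable lebesgue" by auto
qed

lemma phi_sections:
  fixes F :: "('a::euclidean_space \<times> 'b::euclidean_space) set" and a :: 'a and b :: 'b
  assumes F: "compact F"
  defines "\<phi> \<equiv> \<lambda>z. indicator F z - indicator F (z + (a,0)) - indicator F (z + (0,b)) + indicator F (z + (a,b)) :: real"
  shows "integrable lebesgue (\<lambda>y. \<phi> (x,y))" "(\<integral>y. \<phi> (x,y) \<partial>lebesgue) = 0"
    and "integrable lebesgue (\<lambda>x. \<phi> (x,y))" "(\<integral>x. \<phi> (x,y) \<partial>lebesgue) = 0"
proof -
  note I = indicator_section_integrable[OF F]
  have tr1: "integrable lebesgue (\<lambda>y. indicator F (x', b + y) :: real)"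
    "(\<integral>y. indicator F (x', b + y) \<partial>lebesgue) = (\<integral>y. indicator F (x', y) \<partial>lebesgue :: real)" for x'
    using integrable_translate[OF I(3), where t=b] integral_translate[OF I(3), where t=b] I(1) by auto
  have tr2: "integrable lebesgue (\<lambda>x. indicator F (a + x, y') :: real)"
    "(\<integral>x. indicator F (a + x, y') \<partial>lebesgue) = (\<integral>x. indicator F (x, y') \<partial>lebesgue :: real)" for y'
    using integrable_translate[OF I(4), where t=a] integral_translate[OF I(4), where t=a] I(2) by auto
  have e: "\<phi> (x,y) = indicator F (x,y) - indicator F (a + x, y) - indicator F (x, b + y) + indicator F (a + x, b + y)" for x y
    unfolding \<phi>_def by (simp add: add.commute)
  show "integrable lebesgue (\<lambda>y. \<phi> (x,y))" unfolding e using I(1) tr1 by auto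
  show "(\<integral>y. \<phi> (x,y) \<partial>lebesgue) = 0" unfolding e using I(1) tr1 by auto
  show "integrable lebesgue (\<lambda>x. \<phi> (x,y))" unfolding e using I(2) tr2 by auto
  show "(\<integral>x. \<phi> (x,y) \<partial>lebesgue) = 0" unfolding e using I(2) tr2 by auto
qed



lemma minimizer_extreme:
  fixes c :: "'n::finite pt \<Rightarrow> real" and hb h :: "'n pt \<Rightarrow> real" and f g :: "real^'n \<Rightarrow> real"
  assumes cc: "continuous_on UNIV c" and ca: "cost_assumptions c"
    and hbm: "hb \<in> borel_measurable lebesgue"
    and mini: "is_minimizer c (Gamma_bar f g hb) h"
    and \<epsilon>: "\<epsilon> > 0"
  shows "{z. \<epsilon> \<le> h z \<and> h z + \<epsilon> \<le> hb z} \<in> null_sets lebesgue"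
proof (rule ccontr)
  define S where "S = {z. \<epsilon> \<le> h z \<and> h z + \<epsilon> \<le> hb z}"
  assume "S \<notin> null_sets lebesgue"
  have hG: "h \<in> Gamma_bar f g hb" and hmin: "\<And>h'. h' \<in> Gamma_bar f g hb \<Longrightarrow> I_c c h \<le> I_c c h'"
    using mini unfolding is_minimizer_def by auto
  have hL: "L1c h" and h0: "AE z in lebesgue. 0 \<le> h z"
    and hf: "AE x in lebesgue. (\<integral>y. h (x, y) \<partial>lebesgue) = f x"
    and hg: "AE y in lebesgue. (\<integral>x. h (x, y) \<partial>lebesgue) = g y"
    and hhb: "AE z in lebesgue. h z \<le> hb z"
    using hG unfolding Gamma_bar_def Gamma_def by auto
  have hi: "integrable lebesgue h" using hL unfolding L1c_def by auto
  then have hm[measurable]: "h \<in> borel_measurable lebesgue" by auto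
  note hbm[measurable]
  have "{z \<in> space lebesgue. \<epsilon> \<le> h z \<and> h z + \<epsilon> \<le> hb z} \<in> sets lebesgue" by measurable
  then have Ss: "S \<in> sets lebesgue" unfolding S_def by simp
  have Spos: "emeasure lebesgue S > 0"
    using \<open>S \<notin> null_sets lebesgue\<close> Ss by (auto simp: null_sets_def zero_less_iff_neq_zero)
  obtain B D1 D2 \<sigma> i j where B: "open B" "convex B" "bounded B" "emeasure lebesgue (S \<inter> B) > 0"
    and d1: "\<And>z. z \<in> B \<Longrightarrow> (c has_derivative blinfun_apply (D1 z)) (at z)"
    and d2: "\<And>z. z \<in> B \<Longrightarrow> ((D1 :: 'n pt \<Rightarrow> ('n pt \<Rightarrow>\<^sub>L real)) has_derivative
                  blinfun_apply ((D2 :: 'n pt \<Rightarrow> ('n pt \<Rightarrow>\<^sub>L ('n pt \<Rightarrow>\<^sub>L real))) z)) (at z)"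
    and sg: "\<And>w. w \<in> B \<Longrightarrow> \<sigma> * blinfun_apply (blinfun_apply (D2 w) (axis i 1, 0)) (0, axis j 1) > (0::real)"
    by (rule good_ball[OF ca Ss Spos]) blast
  define s where "s = sgn \<sigma>"
  have s1: "\<bar>s\<bar> = 1" and sg': "\<And>w. w \<in> B \<Longrightarrow> s * blinfun_apply (blinfun_apply (D2 w) (axis i 1, 0)) (0, axis j 1) > 0"
  proof -
    obtain w where "w \<in> B" using B(4) by (metis Int_iff emeasure_empty equals0I less_irrefl)
    then have "\<sigma> \<noteq> 0" using sg by fastforce
    then show "\<bar>s\<bar> = 1" by (simp add: s_def)
    show "s * blinfun_apply (blinfun_apply (D2 w) (axis i 1, 0)) (0, axis j 1) > 0" if "w \<in> B" for w
      using sg[OF that] by (cases "\<sigma> > 0") (auto simp: s_def zero_less_mult_iff)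
  qed
  have As: "S \<inter> B \<in> sets lebesgue" using Ss B(1) by auto
  obtain K \<delta> where K: "compact K" "K \<subseteq> S \<inter> B" "\<delta> > 0"
    and Kpos: "\<And>v1 v2 v3. norm v1 < \<delta> \<Longrightarrow> norm v2 < \<delta> \<Longrightarrow> norm v3 < \<delta> \<Longrightarrow>
        measure lebesgue (K \<inter> ((+) v1 ` K) \<inter> ((+) v2 ` K) \<inter> ((+) v3 ` K)) > 0"
    by (rule steinhaus4[OF As _ B(4)]) (use B(3) in auto)
  define t where "t = \<delta> / 3"
  have t: "t > 0" using K(3) by (simp add: t_def)
  define a :: "real^'n" where "a = t *\<^sub>R axis i 1"
  define b :: "real^'n" where "b = t *\<^sub>R axis j 1"
  define v1 :: "'n pt" where "v1 = (a, 0)"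
  define v2 :: "'n pt" where "v2 = (0, b)"
  define v3 :: "'n pt" where "v3 = (a, b)"
  have na: "norm a = t" "norm b = t" using t by (auto simp: a_def b_def)
  have nv: "norm v1 < \<delta>" "norm v2 < \<delta>" "norm v3 < \<delta>"
  proof -
    show "norm v1 < \<delta>" "norm v2 < \<delta>" using na t K(3) by (auto simp: v1_def v2_def t_def)
    have "norm v3 \<le> norm a + norm b" unfolding v3_def by (rule norm_Pair_le)
    then show "norm v3 < \<delta>" using na t K(3) by (simp add: t_def)
  qed
  define F where "F = K \<inter> ((+) v1 ` K) \<inter> ((+) v2 ` K) \<inter> ((+) v3 ` K)"
  have Fpos: "measure lebesgue F > 0" unfolding F_def using Kpos[OF nv] .
  have Fc: "compact F" unfolding F_def using K(1)
    by (intro compact_Int compact_translation) auto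
  define u :: "'n pt \<Rightarrow> real" where "u = indicator F"
  define \<phi> where "\<phi> z = u z - u (z + v1) - u (z + v2) + u (z + v3)" for z
  have \<phi>K: "z \<in> K" if "\<phi> z \<noteq> 0" for z
  proof -
    have "z \<in> F \<or> z + v1 \<in> F \<or> z + v2 \<in> F \<or> z + v3 \<in> F"
      using that unfolding \<phi>_def u_def by (auto simp: indicator_def split: if_splits)
    then show ?thesis unfolding F_def
      by (auto simp: image_iff)
  qed
  have \<phi>b: "\<bar>\<phi> z\<bar> \<le> 2" for z
    unfolding \<phi>_def u_def by (auto simp: indicator_def)

  have Fl: "F \<in> lmeasurable" using Fc lmeasurable_compact by blast
  have ui: "integrable lebesgue u" unfolding u_def using Fl by (auto simp: fmeasurable_def)
  have um[measurable]: "u \<in> borel_measurable lebesgue" using ui by auto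
  have uti: "integrable lebesgue (\<lambda>z. u (z + v))" for v
    using integrable_translate[OF um, where t=v] ui by (simp add: add.commute)
  have \<phi>i: "integrable lebesgue \<phi>"
    unfolding \<phi>_def using ui uti by auto
  have \<phi>m[measurable]: "\<phi> \<in> borel_measurable lebesgue" using \<phi>i by auto
  have \<phi>eq: "\<phi> = (\<lambda>z. indicator F z - indicator F (z + (a,0)) - indicator F (z + (0,b)) + indicator F (z + (a,b)))"
    by (auto simp: \<phi>_def u_def v1_def v2_def v3_def fun_eq_iff)
  have \<phi>x: "integrable lebesgue (\<lambda>y. \<phi> (x,y))" "(\<integral>y. \<phi> (x,y) \<partial>lebesgue) = 0" for x
    unfolding \<phi>eq using phi_sections(1,2)[OF Fc, where a=a and b=b and x=x] by auto
  have \<phi>y: "integrable lebesgue (\<lambda>x. \<phi> (x,y))" "(\<integral>x. \<phi> (x,y) \<partial>lebesgue) = 0" for y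
    unfolding \<phi>eq using phi_sections(3,4)[OF Fc, where a=a and b=b and y=y] by auto
  define d0 where "d0 = - s * \<epsilon> / 2"
  have d0b: "\<bar>d0 * \<phi> z\<bar> \<le> \<epsilon>" for z
  proof -
    have "\<bar>d0 * \<phi> z\<bar> = \<epsilon> / 2 * \<bar>\<phi> z\<bar>" using s1 \<epsilon> by (simp add: d0_def abs_mult)
    also have "\<dots> \<le> \<epsilon> / 2 * 2" using \<phi>b[of z] \<epsilon> by (intro mult_left_mono) auto
    finally show ?thesis by simp
  qed
  define h' where "h' z = h z + d0 * \<phi> z" for z
  have inS: "\<epsilon> \<le> h z \<and> h z + \<epsilon> \<le> hb z" if "\<phi> z \<noteq> 0" for z
    using \<phi>K[OF that] K(2) unfolding S_def by auto
  have h'G: "h' \<in> Gamma_bar f g hb"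
    unfolding Gamma_bar_def Gamma_def L1c_def
  proof (intro CollectI conjI)
    show hi': "integrable lebesgue h'" unfolding h'_def using hi \<phi>i by auto
    obtain Kh where Kh: "compact Kh" "AE z in lebesgue. z \<notin> Kh \<longrightarrow> h z = 0"
      using hL unfolding L1c_def by auto
    show "\<exists>K. compact K \<and> (AE z in lebesgue. z \<notin> K \<longrightarrow> h' z = 0)"
    proof (intro exI conjI)
      show "compact (K \<union> Kh)" using K(1) Kh(1) by auto
      show "AE z in lebesgue. z \<notin> K \<union> Kh \<longrightarrow> h' z = 0"
        using Kh(2) by eventually_elim (use \<phi>K in \<open>auto simp: h'_def\<close>)
    qed
    show "AE z in lebesgue. 0 \<le> h' z"
      using h0
    proof eventually_elim
      case (elim z)
      show ?case
      proof (cases "\<phi> z = 0")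
        case True then show ?thesis using elim by (simp add: h'_def)
      next
        case False then show ?thesis using inS[OF False] d0b[of z] by (simp add: h'_def abs_le_iff)
      qed
    qed
    show "AE z in lebesgue. h' z \<le> hb z"
      using hhb
    proof eventually_elim
      case (elim z)
      show ?case
      proof (cases "\<phi> z = 0")
        case True then show ?thesis using elim by (simp add: h'_def)
      next
        case False then show ?thesis using inS[OF False] d0b[of z] by (simp add: h'_def abs_le_iff)
      qed
    qed
    show "AE x in lebesgue. (\<integral>y. h' (x, y) \<partial>lebesgue) = f x"
      using hf by eventually_elim (simp add: h'_def integral_add_zero_perturb[OF \<phi>x])
    show "AE y in lebesgue. (\<integral>x. h' (x, y) \<partial>lebesgue) = g y"
      using hg by eventually_elim (simp add: h'_def integral_add_zero_perturb[OF \<phi>y])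
  qed
  have le: "I_c c h \<le> I_c c h'" by (rule hmin[OF h'G])
  show False
  proof -
    obtain Mc where Mc: "\<And>z. \<bar>c z\<bar> \<le> Mc"
      using ca unfolding cost_assumptions_def bounded_real by auto
    have cm: "c \<in> borel_measurable lebesgue"
      using borel_measurable_continuous_onI[OF cc] by (simp add: measurable_completion)
    have cvm: "(\<lambda>z. c (z - v)) \<in> borel_measurable lebesgue" for v
    proof -
      have "continuous_on UNIV (\<lambda>z. c (z - v))"
        using cc by (auto intro!: continuous_on_compose2[OF cc] continuous_intros)
      then show ?thesis using borel_measurable_continuous_onI[of "\<lambda>z. c (z - v)"] by (simp add: measurable_completion)
    qed
    have bint: "integrable lebesgue (\<lambda>z. e z * k z)"
      if "e \<in> borel_measurable lebesgue" "\<And>z. \<bar>e z\<bar> \<le> Mc" "integrable lebesgue k" for e k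
    proof (rule Bochner_Integration.integrable_bound[where M=lebesgue and f="\<lambda>z. Mc * k z"])
      show "integrable lebesgue (\<lambda>z. Mc * k z)" using that(3) by auto
      show "(\<lambda>z. e z * k z) \<in> borel_measurable lebesgue" using that(1,3) by auto
      show "AE z in lebesgue. norm (e z * k z) \<le> norm (Mc * k z)"
      proof (intro AE_I2)
        fix z
        have "\<bar>e z\<bar> * \<bar>k z\<bar> \<le> \<bar>Mc\<bar> * \<bar>k z\<bar>" using that(2)[of z] by (intro mult_right_mono) auto
        then show "norm (e z * k z) \<le> norm (Mc * k z)" by (simp add: abs_mult)
      qed
    qed
    have Ich': "I_c c h' = I_c c h + d0 * (\<integral>z. c z * \<phi> z \<partial>lebesgue)"
    proof -
      have "I_c c h' = (\<integral>z. c z * h z + d0 * (c z * \<phi> z) \<partial>lebesgue)"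
        unfolding I_c_def h'_def by (simp add: algebra_simps)
      also have "\<dots> = I_c c h + d0 * (\<integral>z. c z * \<phi> z \<partial>lebesgue)"
        unfolding I_c_def using bint[OF cm Mc hi] bint[OF cm Mc \<phi>i] by simp
      finally show ?thesis .
    qed
    define \<Delta> where "\<Delta> z = c z - c (z - v1) - c (z - v2) + c (z - v3)" for z
    have shift: "(\<integral>z. c z * u (z + v) \<partial>lebesgue) = (\<integral>z. c (z - v) * u z \<partial>lebesgue)" for v
    proof -
      have m: "(\<lambda>w. c (w - v) * u w) \<in> borel_measurable lebesgue" using cvm um by auto
      show ?thesis using integral_translate[OF m, where t=v] by (simp add: add.commute)
    qed
    have i0: "integrable lebesgue (\<lambda>z. c z * u z)" by (rule bint[OF cm Mc ui])
    have i1: "integrable lebesgue (\<lambda>z. c z * u (z + v))" for v by (rule bint[OF cm Mc uti])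
    have i2: "integrable lebesgue (\<lambda>z. c (z - v) * u z)" for v by (rule bint[OF cvm Mc ui])
    have J: "(\<integral>z. c z * \<phi> z \<partial>lebesgue) = (\<integral>z. u z * \<Delta> z \<partial>lebesgue)"
    proof -
      have "(\<integral>z. c z * \<phi> z \<partial>lebesgue) = (\<integral>z. c z * u z - c z * u (z + v1) - c z * u (z + v2) + c z * u (z + v3) \<partial>lebesgue)"
        unfolding \<phi>_def by (simp add: algebra_simps)
      also have "\<dots> = (\<integral>z. c z * u z \<partial>lebesgue) - (\<integral>z. c z * u (z + v1) \<partial>lebesgue) - (\<integral>z. c z * u (z + v2) \<partial>lebesgue) + (\<integral>z. c z * u (z + v3) \<partial>lebesgue)"
        using i0 i1 by simp
      also have "\<dots> = (\<integral>z. c z * u z \<partial>lebesgue) - (\<integral>z. c (z - v1) * u z \<partial>lebesgue) - (\<integral>z. c (z - v2) * u z \<partial>lebesgue) + (\<integral>z. c (z - v3) * u z \<partial>lebesgue)"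
        by (simp only: shift)
      also have "\<dots> = (\<integral>z. c z * u z - c (z - v1) * u z - c (z - v2) * u z + c (z - v3) * u z \<partial>lebesgue)"
        using i0 i2 by simp
      also have "\<dots> = (\<integral>z. u z * \<Delta> z \<partial>lebesgue)"
        unfolding \<Delta>_def by (simp add: algebra_simps)
      finally show ?thesis .
    qed
    have iu\<Delta>: "integrable lebesgue (\<lambda>z. u z * \<Delta> z)"
    proof -
      have "integrable lebesgue (\<lambda>z. c z * u z - c (z - v1) * u z - c (z - v2) * u z + c (z - v3) * u z)"
        using i0 i2 by auto
      then show ?thesis unfolding \<Delta>_def by (simp add: algebra_simps)
    qed
    have pos\<Delta>: "s * \<Delta> z > 0" if "z \<in> F" for z
    proof -
      obtain x y where z: "z = (x,y)" by fastforce
      have tr: "z - v \<in> K" if "z \<in> (+) v ` K" for v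
        using that by auto
      have inK: "z \<in> K" "z - v1 \<in> K" "z - v2 \<in> K" "z - v3 \<in> K"
        using that tr unfolding F_def by auto
      have inB: "(x,y) \<in> B" "(x - a, y) \<in> B" "(x, y - b) \<in> B" "(x - a, y - b) \<in> B"
        using inK K(2) by (auto simp: z v1_def v2_def v3_def)
      obtain w where w: "w \<in> B" and eq: "c (x,y) - c (x-a,y) - c (x,y-b) + c (x-a,y-b) =
            blinfun_apply (blinfun_apply (D2 w) (a,0)) (0,b)"
        using mixed_diff[OF d1 d2 B(2) inB] by blast
      have e2: "blinfun_apply (blinfun_apply (D2 w) (a,0)) (0,b) =
          t * t * blinfun_apply (blinfun_apply (D2 w) (axis i 1, 0)) (0, axis j 1)"
      proof -
        have p1: "(a, 0::real^'n) = t *\<^sub>R (axis i 1, 0)" and p2: "(0::real^'n, b) = t *\<^sub>R (0, axis j 1)"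
          by (simp_all add: a_def b_def)
        show ?thesis unfolding p1 p2 blinfun.scaleR_right blinfun.scaleR_left by simp
      qed
      have "\<Delta> z = c (x,y) - c (x-a,y) - c (x,y-b) + c (x-a,y-b)"
        by (simp add: \<Delta>_def z v1_def v2_def v3_def)
      then have E: "s * \<Delta> z = t * t * (s * blinfun_apply (blinfun_apply (D2 w) (axis i 1, 0)) (0, axis j 1))"
        using eq e2 by (simp add: algebra_simps)
      moreover have "t * t * (s * blinfun_apply (blinfun_apply (D2 w) (axis i 1, 0)) (0, axis j 1)) > 0"
        using sg'[OF w] t by simp
      ultimately show ?thesis by (simp only: E)
    qed
    have Jpos: "s * (\<integral>z. u z * \<Delta> z \<partial>lebesgue) > 0"
    proof -
      have ii: "integrable lebesgue (\<lambda>z. u z * (s * \<Delta> z))"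
        using iu\<Delta> by (simp add: mult.left_commute)
      have nn: "\<And>z. 0 \<le> u z * (s * \<Delta> z)"
        using pos\<Delta> by (auto simp: u_def indicator_def less_imp_le)
      have "(\<integral>z. u z * (s * \<Delta> z) \<partial>lebesgue) \<noteq> 0"
      proof
        assume "(\<integral>z. u z * (s * \<Delta> z) \<partial>lebesgue) = 0"
        then have "AE z in lebesgue. u z * (s * \<Delta> z) = 0"
          using integral_nonneg_eq_0_iff_AE[OF ii] nn by auto
        then have "AE z in lebesgue. z \<notin> F"
        proof eventually_elim
          case (elim z)
          show ?case
          proof
            assume zF: "z \<in> F"
            then have "u z * (s * \<Delta> z) > 0" using pos\<Delta>[OF zF] by (simp add: u_def)
            then show False using elim by simp
          qed
        qed
        then have "F \<in> null_sets lebesgue"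
          using Fl by (auto simp: AE_iff_null_sets[symmetric] fmeasurable_def)
        then show False using Fpos by (simp add: null_sets_def measure_def)
      qed
      moreover have "(\<integral>z. u z * (s * \<Delta> z) \<partial>lebesgue) \<ge> 0"
        using nn by (simp add: integral_nonneg_AE)
      moreover have "(\<integral>z. u z * (s * \<Delta> z) \<partial>lebesgue) = s * (\<integral>z. u z * \<Delta> z \<partial>lebesgue)"
        by (simp add: mult.left_commute)
      ultimately show ?thesis by linarith
    qed
    have "d0 * (\<integral>z. c z * \<phi> z \<partial>lebesgue) = - (\<epsilon> / 2) * (s * (\<integral>z. u z * \<Delta> z \<partial>lebesgue))"
      unfolding J d0_def by (simp add: algebra_simps)
    also have "\<dots> < 0" using Jpos \<epsilon> by (simp add: mult_pos_pos)
    finally show False using le Ich' by linarith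
  qed
qed


theorem theorem8p1:
  fixes c :: "'n::finite pt \<Rightarrow> real"
    and hb :: "'n pt \<Rightarrow> real"
    and f g :: "real^'n \<Rightarrow> real"
  assumes "continuous_on UNIV c"
    and "cost_assumptions c"
    and "hb \<in> borel_measurable lebesgue"
    and "AE z in lebesgue. 0 \<le> hb z"
    and "\<exists>M. AE z in lebesgue. \<bar>hb z\<bar> \<le> M"
    and "\<exists>K. compact K \<and> (AE z in lebesgue. z \<notin> K \<longrightarrow> hb z = 0)"
    and "L1c f" and "AE x in lebesgue. 0 \<le> f x"
    and "L1c g" and "AE y in lebesgue. 0 \<le> g y"
    and "Gamma_bar f g hb \<noteq> {}"
    and "is_minimizer c (Gamma_bar f g hb) h1"
    and "is_minimizer c (Gamma_bar f g hb) h2"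
  shows "AE z in lebesgue. h1 z = h2 z"
proof -
  note cc = assms(1) and ca = assms(2) and hbm = assms(3)
  note m1 = assms(12) and m2 = assms(13)
  have G1: "h1 \<in> Gamma_bar f g hb" and min1: "\<And>h'. h' \<in> Gamma_bar f g hb \<Longrightarrow> I_c c h1 \<le> I_c c h'"
    using m1 unfolding is_minimizer_def by auto
  have G2: "h2 \<in> Gamma_bar f g hb" and min2: "\<And>h'. h' \<in> Gamma_bar f g hb \<Longrightarrow> I_c c h2 \<le> I_c c h'"
    using m2 unfolding is_minimizer_def by auto
  have L1: "L1c h1" and p1: "AE z in lebesgue. 0 \<le> h1 z"
    and f1: "AE x in lebesgue. (\<integral>y. h1 (x, y) \<partial>lebesgue) = f x"
    and g1: "AE y in lebesgue. (\<integral>x. h1 (x, y) \<partial>lebesgue) = g y"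
    and b1: "AE z in lebesgue. h1 z \<le> hb z"
    using G1 unfolding Gamma_bar_def Gamma_def by auto
  have L2: "L1c h2" and p2: "AE z in lebesgue. 0 \<le> h2 z"
    and f2: "AE x in lebesgue. (\<integral>y. h2 (x, y) \<partial>lebesgue) = f x"
    and g2: "AE y in lebesgue. (\<integral>x. h2 (x, y) \<partial>lebesgue) = g y"
    and b2: "AE z in lebesgue. h2 z \<le> hb z"
    using G2 unfolding Gamma_bar_def Gamma_def by auto
  have i1: "integrable lebesgue h1" using L1 unfolding L1c_def by auto
  have i2: "integrable lebesgue h2" using L2 unfolding L1c_def by auto
  define h where "h z = (h1 z + h2 z) / 2" for z
  have hG: "h \<in> Gamma_bar f g hb"
    unfolding Gamma_bar_def Gamma_def L1c_def
  proof (intro CollectI conjI)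
    show "integrable lebesgue h" unfolding h_def using i1 i2 by auto
    obtain K1 where K1: "compact K1" "AE z in lebesgue. z \<notin> K1 \<longrightarrow> h1 z = 0"
      using L1 unfolding L1c_def by auto
    obtain K2 where K2: "compact K2" "AE z in lebesgue. z \<notin> K2 \<longrightarrow> h2 z = 0"
      using L2 unfolding L1c_def by auto
    show "\<exists>K. compact K \<and> (AE z in lebesgue. z \<notin> K \<longrightarrow> h z = 0)"
    proof (intro exI conjI)
      show "compact (K1 \<union> K2)" using K1 K2 by auto
      show "AE z in lebesgue. z \<notin> K1 \<union> K2 \<longrightarrow> h z = 0"
        using K1(2) K2(2) by eventually_elim (auto simp: h_def)
    qed
    show "AE z in lebesgue. 0 \<le> h z" using p1 p2 by eventually_elim (auto simp: h_def)
    show "AE z in lebesgue. h z \<le> hb z" using b1 b2 by eventually_elim (auto simp: h_def)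
    show "AE x in lebesgue. (\<integral>y. h (x, y) \<partial>lebesgue) = f x"
      using f1 f2 lebesgue_sections_integrable(1)[OF i1] lebesgue_sections_integrable(1)[OF i2]
      by eventually_elim (simp add: h_def)
    show "AE y in lebesgue. (\<integral>x. h (x, y) \<partial>lebesgue) = g y"
      using g1 g2 lebesgue_sections_integrable(2)[OF i1] lebesgue_sections_integrable(2)[OF i2]
      by eventually_elim (simp add: h_def)
  qed
  obtain Mc where Mc: "\<And>z. \<bar>c z\<bar> \<le> Mc"
    using ca unfolding cost_assumptions_def bounded_real by auto
  have cm: "c \<in> borel_measurable lebesgue"
    using borel_measurable_continuous_onI[OF cc] by (simp add: measurable_completion)
  have bint: "integrable lebesgue (\<lambda>z. c z * k z)" if "integrable lebesgue k" for k
  proof (rule Bochner_Integration.integrable_bound[where M=lebesgue and f="\<lambda>z. Mc * k z"])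
    show "integrable lebesgue (\<lambda>z. Mc * k z)" using that by auto
    show "(\<lambda>z. c z * k z) \<in> borel_measurable lebesgue" using cm that by auto
    show "AE z in lebesgue. norm (c z * k z) \<le> norm (Mc * k z)"
    proof (intro AE_I2)
      fix z
      have "\<bar>c z\<bar> * \<bar>k z\<bar> \<le> \<bar>Mc\<bar> * \<bar>k z\<bar>" using Mc[of z] by (intro mult_right_mono) auto
      then show "norm (c z * k z) \<le> norm (Mc * k z)" by (simp add: abs_mult)
    qed
  qed
  have Ih: "I_c c h = (I_c c h1 + I_c c h2) / 2"
  proof -
    have "I_c c h = (\<integral>z. (c z * h1 z + c z * h2 z) / 2 \<partial>lebesgue)"
      unfolding I_c_def h_def by (simp add: algebra_simps)
    also have "\<dots> = (I_c c h1 + I_c c h2) / 2"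
      unfolding I_c_def using bint[OF i1] bint[OF i2] by simp
    finally show ?thesis .
  qed
  have "I_c c h1 \<le> I_c c h2" "I_c c h2 \<le> I_c c h1" using min1[OF G2] min2[OF G1] .
  then have "I_c c h = I_c c h1" using Ih by simp
  then have hmin: "is_minimizer c (Gamma_bar f g hb) h"
    unfolding is_minimizer_def using hG min1 by simp
  have null: "{z. 1 / real (Suc n) \<le> h z \<and> h z + 1 / real (Suc n) \<le> hb z} \<in> null_sets lebesgue" for n
    by (rule minimizer_extreme[OF cc ca hbm hmin]) simp
  have "AE z in lebesgue. z \<notin> {z. 1 / real (Suc n) \<le> h z \<and> h z + 1 / real (Suc n) \<le> hb z}" for n
    using AE_not_in[OF null] .
  then have ext: "AE z in lebesgue. \<forall>n. \<not> (1 / real (Suc n) \<le> h z \<and> h z + 1 / real (Suc n) \<le> hb z)"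
    by (simp add: AE_all_countable)
  show ?thesis
    using ext p1 p2 b1 b2
  proof eventually_elim
    case (elim z)
    show ?case
    proof (rule ccontr)
      assume ne: "h1 z \<noteq> h2 z"
      have "0 < h z" "0 < hb z - h z" using ne elim(2-5) by (auto simp: h_def)
      then have "0 < min (h z) (hb z - h z)" by simp
      then obtain n where n: "inverse (real (Suc n)) < min (h z) (hb z - h z)"
        using reals_Archimedean by blast
      then have "1 / real (Suc n) \<le> h z \<and> h z + 1 / real (Suc n) \<le> hb z"
        by (auto simp: inverse_eq_divide)
      then show False using elim(1) by blast
    qed
  qed
qed

end
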